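(* Consider the two-player non-cooperative pricing game between two multi-homing mobile devices (MMD relays) $r_1,r_2$, in which the strategy of player $r_i$ is its charging price $p_{r_i}\in[0,+\infty)$ and, with the offered bandwidths $\omega_1,\omega_2>0$ held fixed, the utility of player $r_i$ ($i\in\{1,2\}$, $j\neq i$) is $$U_i(p_{r_i},p_{r_j}) \;=\; p_{r_i}\cdot \frac{n}{1+2^{\,p_{r_i}-p_{r_j}}\,\dfrac{\omega_j Y_j}{\omega_i Y_i}} \;-\; c_i\,\omega_i .$$ Then this game has a unique Nash equilibrium.
   Context: Here $n>0$ is the total number of ordinary mobile devices (OMDs), and the fraction expression is the number of OMDs attached to $r_i$ at the evolutionary equilibrium of the OMDs' relay-selection game. $c_i\ge 0$ is the relay cost of $r_i$ per unit bandwidth. $Y_i=\max\{\tau_i,b_i\}>0$ with $b_i=1+SNR_{s_i d_i}$, $\tau_i=1+SNR_{s_i d_i}+SNR_{s_i r_i d_i}$, $SNR_{s_i d_i}=P|h_{s_id_i}|^2/\sigma^2$, $SNR_{s_ir_id_i}=\frac{P^2|h_{s_ir_i}|^2|h_{r_id_i}|^2}{\sigma^2(\sigma^2+P|h_{s_ir_i}|^2+P|h_{r_id_i}|^2)}$ (transmit power $P>0$, noise variance $\sigma^2>0$, channel gains $h$ between source $s_i$, relay $r_i$, destination $d_i$). A Nash equilibrium is a pair $(p_{r_1}^*,p_{r_2}^* )$ such that for each $i$, $U_i(p_{r_i}^*,p_{r_j}^* )\ge U_i(p_{r_i},p_{r_j}^* )$ for all $p_{r_i}\ge 0$. *)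

theory Defs
  imports Complex_Main
begin

definition snr_direct :: "real \<Rightarrow> real \<Rightarrow> complex \<Rightarrow> real" where
  "snr_direct P \<sigma>2 h_sd = P * (cmod h_sd)^2 / \<sigma>2"

definition snr_relay :: "real \<Rightarrow> real \<Rightarrow> complex \<Rightarrow> complex \<Rightarrow> real" where
  "snr_relay P \<sigma>2 h_sr h_rd =
     P^2 * (cmod h_sr)^2 * (cmod h_rd)^2 /
     (\<sigma>2 * (\<sigma>2 + P * (cmod h_sr)^2 + P * (cmod h_rd)^2))"

definition Yval :: "real \<Rightarrow> real \<Rightarrow> complex \<Rightarrow> complex \<Rightarrow> complex \<Rightarrow> real" where
  "Yval P \<sigma>2 h_sd h_sr h_rd =
     max (1 + snr_direct P \<sigma>2 h_sd + snr_relay P \<sigma>2 h_sr h_rd)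
         (1 + snr_direct P \<sigma>2 h_sd)"

definition utility :: "real \<Rightarrow> real \<Rightarrow> real \<Rightarrow> real \<Rightarrow> real \<Rightarrow> real \<Rightarrow> real \<Rightarrow> real \<Rightarrow> real" where
  "utility n c_i \<omega>_i Y_i \<omega>_j Y_j p_i p_j =
     p_i * (n / (1 + 2 powr (p_i - p_j) * ((\<omega>_j * Y_j) / (\<omega>_i * Y_i)))) - c_i * \<omega>_i"

definition is_NE :: "(real \<Rightarrow> real \<Rightarrow> real) \<Rightarrow> (real \<Rightarrow> real \<Rightarrow> real) \<Rightarrow> real \<times> real \<Rightarrow> bool" where
  "is_NE U1 U2 pp \<longleftrightarrow>
     (let p1 = fst pp; p2 = snd pp in
       p1 \<ge> 0 \<and> p2 \<ge> 0 \<and>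
       (\<forall>p\<ge>0. U1 p1 p2 \<ge> U1 p p2) \<and>
       (\<forall>p\<ge>0. U2 p2 p1 \<ge> U2 p p1))"

end

theory Submission
  imports Defs
begin

lemma exp_strict: "u \<noteq> 0 \<Longrightarrow> 1 + u < exp (u::real)"
  using exp_minus_greater[of "-u"] by simp

lemma L_strict:
  fixes k r q ps p :: real
  assumes k: "k > 0" and r: "r > 0"
    and foc: "r * exp (k * (ps - q)) * (k * ps - 1) = 1" and ne: "p \<noteq> ps"
  shows "p / (1 + exp (k * (p - q)) * r) < ps / (1 + exp (k * (ps - q)) * r)"
proof -
  define B where "B = r * exp (k * (ps - q))"
  define u where "u = k * (p - ps)"
  have B: "B > 0" using r by (simp add: B_def)
  have "B * (k * ps - 1) = 1" using foc by (simp add: B_def)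
  hence kps: "k * ps - 1 = 1 / B" using B by (simp add: field_simps)
  have u0: "u \<noteq> 0" using k ne by (simp add: u_def)
  have e: "exp (k * (p - q)) * r = B * exp u"
    by (simp add: B_def u_def algebra_simps flip: exp_add)
  have e2: "exp (k * (ps - q)) * r = B" by (simp add: B_def)
  have key: "k * p < k * ps - 1 + exp u"
    using exp_strict[OF u0] by (simp add: u_def algebra_simps)
  have "k * p * B < (k * ps - 1 + exp u) * B" using key B by simp
  also have "\<dots> = 1 + B * exp u" using kps B by (simp add: field_simps)
  finally have k1: "k * p * B < 1 + B * exp u" .
  have hB: "B * (k * ps) = 1 + B" using \<open>B * (k * ps - 1) = 1\<close> by (simp add: algebra_simps)
  have "p * (1 + B) < ps * (1 + B * exp u)"
  proof -
    have "p * (1 + B) * (B * k) = (k * p * B) * (1 + B)" by (simp add: algebra_simps)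
    also have "\<dots> < (1 + B * exp u) * (1 + B)" using k1 B by simp
    also have "\<dots> = (B * (k * ps)) * (1 + B * exp u)" using hB by simp
    also have "\<dots> = ps * (1 + B * exp u) * (B * k)" by (simp add: algebra_simps)
    finally show ?thesis using B k by simp
  qed
  moreover have "0 < 1 + B * exp u" using B by (simp add: add_pos_pos)
  ultimately show ?thesis unfolding e e2 using B by (simp add: field_simps)
qed

lemma foc_exists:
  fixes k r q :: real
  assumes k: "k > 0" and r: "r > 0"
  shows "\<exists>ps\<ge>0. r * exp (k * (ps - q)) * (k * ps - 1) = 1"
proof -
  define \<phi> where "\<phi> = (\<lambda>p. r * exp (k * (p - q)) * (k * p - 1))"
  define b where "b = 2 / k + \<bar>q\<bar> + \<bar>ln r\<bar> / k"
  have a0: "\<phi> (1/k) \<le> 1" using k by (simp add: \<phi>_def)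
  have b1: "k * b - 1 \<ge> 1" using k by (simp add: b_def field_simps)
  have "k * (b - q) \<ge> - ln r"
  proof -
    have "k * (b - q) = 2 + k * (\<bar>q\<bar> - q) + \<bar>ln r\<bar>" using k by (simp add: b_def field_simps)
    moreover have "k * (\<bar>q\<bar> - q) \<ge> 0" using k by simp
    ultimately show ?thesis by linarith
  qed
  hence "exp (k * (b - q)) \<ge> exp (- ln r)" by simp
  hence "exp (k * (b - q)) \<ge> 1 / r" using r by (simp add: exp_minus exp_ln inverse_eq_divide)
  hence "r * exp (k * (b - q)) \<ge> 1" using r by (simp add: field_simps)
  hence b0: "\<phi> b \<ge> 1" using b1 unfolding \<phi>_def
    by (metis mult_mono mult_1_left zero_le_one order_trans less_imp_le exp_gt_zero mult_pos_pos r linorder_not_le order.trans)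
  have ab: "1/k \<le> b" using k by (simp add: b_def field_simps)
  have "continuous_on {1/k..b} \<phi>" unfolding \<phi>_def by (intro continuous_intros)
  then obtain x where "1/k \<le> x" "x \<le> b" "\<phi> x = 1" using IVT'[OF a0 b0 ab] by blast
  moreover have "0 \<le> 1/k" using k by simp
  ultimately have "0 \<le> x" "\<phi> x = 1" by linarith+
  thus ?thesis unfolding \<phi>_def by (intro exI[of _ x]) auto
qed

lemma best_resp:
  fixes k r q C n p0 :: real
  assumes k: "k > 0" and r: "r > 0" and n: "n > 0" and p0: "p0 \<ge> 0"
  shows "(\<forall>p\<ge>0. p * (n / (1 + exp (k * (p - q)) * r)) - C \<le> p0 * (n / (1 + exp (k * (p0 - q)) * r)) - C)
     \<longleftrightarrow> r * exp (k * (p0 - q)) * (k * p0 - 1) = 1"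
proof -
  have eq: "\<And>p. p * (n / (1 + exp (k * (p - q)) * r)) = n * (p / (1 + exp (k * (p - q)) * r))" by simp
  show ?thesis
  proof
    assume foc: "r * exp (k * (p0 - q)) * (k * p0 - 1) = 1"
    show "\<forall>p\<ge>0. p * (n / (1 + exp (k * (p - q)) * r)) - C \<le> p0 * (n / (1 + exp (k * (p0 - q)) * r)) - C"
    proof (intro allI impI)
      fix p :: real
      show "p * (n / (1 + exp (k * (p - q)) * r)) - C \<le> p0 * (n / (1 + exp (k * (p0 - q)) * r)) - C"
      proof (cases "p = p0")
        case False
        from L_strict[OF k r foc False]
        have "n * (p / (1 + exp (k * (p - q)) * r)) < n * (p0 / (1 + exp (k * (p0 - q)) * r))"
          using n by (rule mult_strict_left_mono)
        thus ?thesis unfolding eq by linarith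
      qed simp
    qed
  next
    assume all: "\<forall>p\<ge>0. p * (n / (1 + exp (k * (p - q)) * r)) - C \<le> p0 * (n / (1 + exp (k * (p0 - q)) * r)) - C"
    obtain ps where ps: "ps \<ge> 0" "r * exp (k * (ps - q)) * (k * ps - 1) = 1" using foc_exists[OF k r] by blast
    show "r * exp (k * (p0 - q)) * (k * p0 - 1) = 1"
    proof (cases "p0 = ps")
      case False
      from L_strict[OF k r ps(2) False]
      have "n * (p0 / (1 + exp (k * (p0 - q)) * r)) < n * (ps / (1 + exp (k * (ps - q)) * r))"
        using n by (rule mult_strict_left_mono)
      with all ps(1) show ?thesis unfolding eq by force
    qed (use ps in simp)
  qed
qed

lemma joint_unique_aux:
  fixes k r r' p1 p2 :: real
  assumes k: "k > 0" and r: "r > 0" and rr: "r * r' = 1"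
    and f1: "r * exp (k * (p1 - p2)) * (k * p1 - 1) = 1"
    and f2: "r' * exp (k * (p2 - p1)) * (k * p2 - 1) = 1"
  shows "k * p1 = 1 + 1 / (r * exp (k * (p1 - p2)))"
    and "k * p2 = 1 + r * exp (k * (p1 - p2))"
    and "k * (p1 - p2) + r * exp (k * (p1 - p2)) - 1 / (r * exp (k * (p1 - p2))) = 0"
proof -
  define d where "d = k * (p1 - p2)"
  have t: "r * exp d > 0" using r by simp
  have f1': "r * exp d * (k * p1 - 1) = 1" using f1 unfolding d_def .
  have a: "k * p1 - 1 = 1 / (r * exp d)" using f1' t r by (simp add: eq_divide_eq mult.commute)
  have r': "r' = 1 / r" using rr r by (simp add: field_simps)
  have "k * (p2 - p1) = - d" by (simp add: d_def algebra_simps)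
  hence ed: "exp (k * (p2 - p1)) = 1 / exp d" by (simp add: exp_minus inverse_eq_divide)
  have b: "k * p2 - 1 = r * exp d" using f2 t r unfolding r' ed by (simp add: field_simps)
  show "k * p1 = 1 + 1 / (r * exp (k * (p1 - p2)))" using a unfolding d_def[symmetric] by linarith
  show "k * p2 = 1 + r * exp (k * (p1 - p2))" using b unfolding d_def[symmetric] by linarith
  have "d = (k * p1 - 1) - (k * p2 - 1)" by (simp add: d_def algebra_simps)
  thus "k * (p1 - p2) + r * exp (k * (p1 - p2)) - 1 / (r * exp (k * (p1 - p2))) = 0"
    using a b unfolding d_def[symmetric] by linarith
qed

lemma G_mono:
  fixes r d d' :: real
  assumes r: "r > 0" and "d < d'"
  shows "d + r * exp d - 1 / (r * exp d) < d' + r * exp d' - 1 / (r * exp d')"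
proof -
  have "r * exp d < r * exp d'" using assms by simp
  moreover have "1 / (r * exp d') < 1 / (r * exp d)"
    using \<open>r * exp d < r * exp d'\<close> r by (intro divide_strict_left_mono) auto
  ultimately show ?thesis using assms by linarith
qed

lemma joint:
  fixes k r r' :: real
  assumes k: "k > 0" and r: "r > 0" and rr: "r * r' = 1"
  shows "\<exists>!pp. fst pp \<ge> 0 \<and> snd pp \<ge> 0 \<and>
     r * exp (k * (fst pp - snd pp)) * (k * fst pp - 1) = 1 \<and>
     r' * exp (k * (snd pp - fst pp)) * (k * snd pp - 1) = 1"
proof -
  define G where "G = (\<lambda>d::real. d + r * exp d - 1 / (r * exp d))"
  have cG: "continuous_on {-r..1/r} G" unfolding G_def using r by (intro continuous_intros) auto
  have G1: "G (-r) \<le> 0"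
  proof -
    have "exp (-r) \<le> 1" using r by simp
    hence "r * exp (-r) \<le> r" using r by (simp add: mult_le_cancel_left1)
    moreover have "1 / (r * exp (-r)) \<ge> 0" using r by simp
    ultimately show ?thesis unfolding G_def by linarith
  qed
  have G2: "0 \<le> G (1/r)"
  proof -
    have "exp (1/r) \<ge> 1" using r by simp
    hence "1 / (r * exp (1/r)) \<le> 1 / r" using r by (intro divide_left_mono) (auto simp: mult_le_cancel_left1)
    moreover have "r * exp (1/r) \<ge> 0" using r by simp
    ultimately show ?thesis unfolding G_def by linarith
  qed
  have le: "-r \<le> 1/r" using r by (smt (verit) divide_pos_pos)
  obtain d where d: "G d = 0" using IVT'[OF G1 G2 le cG] by blast
  define t where "t = r * exp d"
  have t: "t > 0" using r by (simp add: t_def)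
  define p1 where "p1 = (1 + 1 / t) / k"
  define p2 where "p2 = (1 + t) / k"
  have dd: "d = 1 / t - t" using d by (simp add: G_def t_def)
  have "p1 - p2 = ((1 + 1/t) - (1 + t)) / k" unfolding p1_def p2_def by (rule diff_divide_distrib[symmetric])
  hence diff: "k * (p1 - p2) = d" using k dd by simp
  have diff2: "k * (p2 - p1) = - d" using diff by (simp add: algebra_simps)
  have ex: "fst (p1,p2) \<ge> 0 \<and> snd (p1,p2) \<ge> 0 \<and>
     r * exp (k * (fst (p1,p2) - snd (p1,p2))) * (k * fst (p1,p2) - 1) = 1 \<and>
     r' * exp (k * (snd (p1,p2) - fst (p1,p2))) * (k * snd (p1,p2) - 1) = 1"
  proof (simp only: fst_conv snd_conv diff diff2, intro conjI)
    show "p1 \<ge> 0" using k t by (simp add: p1_def)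
    show "p2 \<ge> 0" using k t by (simp add: p2_def)
    have "k * p1 - 1 = 1 / t" using k by (simp add: p1_def field_simps)
    thus "r * exp d * (k * p1 - 1) = 1" using t r by (simp add: t_def)
    have "k * p2 - 1 = t" using k by (simp add: p2_def field_simps)
    moreover have "r' = 1 / r" using rr r by (simp add: field_simps)
    ultimately show "r' * exp (- d) * (k * p2 - 1) = 1" using r
      by (simp add: t_def exp_minus field_simps)
  qed
  show ?thesis
  proof (rule ex1I[of _ "(p1,p2)"])
    show "fst (p1,p2) \<ge> 0 \<and> snd (p1,p2) \<ge> 0 \<and>
     r * exp (k * (fst (p1,p2) - snd (p1,p2))) * (k * fst (p1,p2) - 1) = 1 \<and>
     r' * exp (k * (snd (p1,p2) - fst (p1,p2))) * (k * snd (p1,p2) - 1) = 1" by (rule ex)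
  next
    fix pp :: "real \<times> real"
    assume h: "fst pp \<ge> 0 \<and> snd pp \<ge> 0 \<and>
     r * exp (k * (fst pp - snd pp)) * (k * fst pp - 1) = 1 \<and>
     r' * exp (k * (snd pp - fst pp)) * (k * snd pp - 1) = 1"
    obtain q1 q2 where pp: "pp = (q1, q2)" by (cases pp)
    have f1: "r * exp (k * (q1 - q2)) * (k * q1 - 1) = 1"
      and f2: "r' * exp (k * (q2 - q1)) * (k * q2 - 1) = 1" using h pp by auto
    note J = joint_unique_aux[OF k r rr f1 f2]
    define d' where "d' = k * (q1 - q2)"
    have Gd': "G d' = 0" using J(3) by (simp add: G_def d'_def)
    have "d' = d"
    proof (rule ccontr)
      assume "d' \<noteq> d"
      hence "d' < d \<or> d < d'" by linarith
      thus False using G_mono[OF r, of d' d] G_mono[OF r, of d d'] Gd' d unfolding G_def by auto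
    qed
    hence "k * q1 = k * p1" "k * q2 = k * p2"
      using J(1,2) k by (simp_all add: d'_def p1_def p2_def t_def)
    hence "q1 = p1" "q2 = p2" using k by auto
    thus "pp = (p1, p2)" using pp by simp
  qed
qed

lemma Y_pos: "P > 0 \<Longrightarrow> \<sigma>2 > 0 \<Longrightarrow> Yval P \<sigma>2 a b c > 0"
proof -
  assume "P > 0" "\<sigma>2 > 0"
  hence "snr_direct P \<sigma>2 a \<ge> 0" by (simp add: snr_direct_def)
  thus ?thesis by (simp add: Yval_def)
qed

lemma powr2: "(2::real) powr x = exp (ln 2 * x)"
  by (simp add: powr_def mult.commute)

theorem theorem2:
  fixes n :: nat and P \<sigma>2 c1 c2 \<omega>1 \<omega>2 :: real
    and h_s1d1 h_s1r1 h_r1d1 h_s2d2 h_s2r2 h_r2d2 :: complex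
  assumes "n > 0" and "P > 0" and "\<sigma>2 > 0"
    and "c1 \<ge> 0" and "c2 \<ge> 0" and "\<omega>1 > 0" and "\<omega>2 > 0"
  defines "Y1 \<equiv> Yval P \<sigma>2 h_s1d1 h_s1r1 h_r1d1"
    and "Y2 \<equiv> Yval P \<sigma>2 h_s2d2 h_s2r2 h_r2d2"
  shows "\<exists>!pp. is_NE (utility (real n) c1 \<omega>1 Y1 \<omega>2 Y2)
                       (utility (real n) c2 \<omega>2 Y2 \<omega>1 Y1) pp"
proof -
  define k :: real where "k = ln 2"
  have k: "k > 0" by (simp add: k_def)
  have Y1: "Y1 > 0" unfolding Y1_def using assms(2,3) by (rule Y_pos)
  have Y2: "Y2 > 0" unfolding Y2_def using assms(2,3) by (rule Y_pos)
  define r where "r = (\<omega>2 * Y2) / (\<omega>1 * Y1)"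
  define r' where "r' = (\<omega>1 * Y1) / (\<omega>2 * Y2)"
  have r: "r > 0" using Y1 Y2 assms(6,7) by (simp add: r_def)
  have r': "r' > 0" using Y1 Y2 assms(6,7) by (simp add: r'_def)
  have rr: "r * r' = 1" using Y1 Y2 assms(6,7) by (simp add: r_def r'_def)
  have nn: "real n > 0" using assms(1) by simp
  have U: "\<And>c \<omega> Y \<omega>' Y' p q. utility (real n) c \<omega> Y \<omega>' Y' p q =
      p * (real n / (1 + exp (k * (p - q)) * ((\<omega>' * Y') / (\<omega> * Y)))) - c * \<omega>"
    by (simp add: utility_def powr2 k_def)
  have NE: "\<And>pp. is_NE (utility (real n) c1 \<omega>1 Y1 \<omega>2 Y2) (utility (real n) c2 \<omega>2 Y2 \<omega>1 Y1) pp \<longleftrightarrow>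
     (fst pp \<ge> 0 \<and> snd pp \<ge> 0 \<and>
     r * exp (k * (fst pp - snd pp)) * (k * fst pp - 1) = 1 \<and>
     r' * exp (k * (snd pp - fst pp)) * (k * snd pp - 1) = 1)"
  proof -
    fix pp :: "real \<times> real"
    show "?thesis pp"
      unfolding is_NE_def Let_def U r_def[symmetric] r'_def[symmetric]
      using best_resp[OF k r nn, of "fst pp" "snd pp" "c1 * \<omega>1"]
            best_resp[OF k r' nn, of "snd pp" "fst pp" "c2 * \<omega>2"]
      by auto
  qed
  show ?thesis unfolding NE using joint[OF k r rr] .
qed

end
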